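(* Let $\mathcal{H}=\bigotimes_{i=1}^n\mathbb{C}^{d_i}$, let $|\psi\rangle\in\mathcal{H}$ be a fully entangled pure state, and let $g=g_1\otimes\cdots\otimes g_n$ and $h=h_1\otimes\cdots\otimes h_n$ with $g_i,h_i\in GL(d_i,\mathbb{C})$. Put $G=g^\dagger g$, $H=h^\dagger h$ and $r=\|h|\psi\rangle\|^2/\|g|\psi\rangle\|^2$. Then the state $g|\psi\rangle$ can be transformed into the state $h|\psi\rangle$ via SEP if and only if there exist a finite set of probabilities $p_k\ge 0$ with $\sum_k p_k=1$, symmetries $\{S_k\}_k\subseteq\mathcal{S}_\psi$, and finitely many local matrices $N_q\in\mathcal{N}_{g\psi}$ such that $$\frac{1}{r}\sum_k p_k S_k^\dagger H S_k+g^\dagger\Big(\sum_q N_q^\dagger N_q\Big)g=G.$$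
   Context: A pure state $|\psi\rangle\in\bigotimes_{i=1}^n\mathbb{C}^{d_i}$ is fully entangled if each single-party reduced density matrix $\rho_i$ has rank $d_i$. A CPTP map $\Lambda$ on $\mathcal{B}(\mathcal{H})$ is in SEP if it has a Kraus decomposition $\Lambda(X)=\sum_i K_iXK_i^\dagger$, $\sum_i K_i^\dagger K_i=\mathbb{1}$, with every $K_i=\bigotimes_{j=1}^n K_i^{(j)}$, $K_i^{(j)}\in M(d_j,\mathbb{C})$. A (possibly unnormalized) state $|\alpha\rangle$ can be transformed into $|\beta\rangle$ via a class of maps if some map $\Lambda$ in the class satisfies $\Lambda(|\alpha\rangle\langle\alpha|/\langle\alpha|\alpha\rangle)=|\beta\rangle\langle\beta|/\langle\beta|\beta\rangle$. The stabilizer $\mathcal{S}_\psi$ is the set of operators $S=S^{(1)}\otimes\cdots\otimes S^{(n)}$ with $S^{(i)}\in GL(d_i,\mathbb{C})$ and $S|\psi\rangle=|\psi\rangle$. For a vector $|\chi\rangle$, $\mathcal{N}_{\chi}$ is the set of operators $N=N^{(1)}\otimes\cdots\otimes N^{(n)}$ with $N^{(i)}\in M(d_i,\mathbb{C})$ and $N|\chi\rangle=0$; here $\mathcal{N}_{g\psi}$ refers to $|\chi\rangle=g|\psi\rangle$. *)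

theory Defs
  imports Complex_Main "Jordan_Normal_Form.DL_Rank"
begin

text \<open>The Hilbert space (C^d_0) tensor ... tensor (C^d_(n-1)) is modelled by complex functions on
  the finite set of multi-indices idxs n d; global operators are functions idx => idx => complex
  (matrices indexed by idxs n d).  Local operators are families K j (j < n) of JNF matrices.\<close>

type_synonym idx = "nat \<Rightarrow> nat"
type_synonym gvec = "idx \<Rightarrow> complex"
type_synonym gop = "idx \<Rightarrow> idx \<Rightarrow> complex"
type_synonym local_op = "nat \<Rightarrow> complex mat"

definition idxs :: "nat \<Rightarrow> (nat \<Rightarrow> nat) \<Rightarrow> idx set" where
  "idxs n d = (\<Pi>\<^sub>E j\<in>{..<n}. {..<d j})"

definition tensor_op :: "nat \<Rightarrow> local_op \<Rightarrow> gop" where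
  "tensor_op n K = (\<lambda>x y. \<Prod>j<n. K j $$ (x j, y j))"

definition op_apply :: "nat \<Rightarrow> (nat \<Rightarrow> nat) \<Rightarrow> gop \<Rightarrow> gvec \<Rightarrow> gvec" where
  "op_apply n d A v = (\<lambda>x. \<Sum>y\<in>idxs n d. A x y * v y)"

definition op_mult :: "nat \<Rightarrow> (nat \<Rightarrow> nat) \<Rightarrow> gop \<Rightarrow> gop \<Rightarrow> gop" where
  "op_mult n d A B = (\<lambda>x y. \<Sum>z\<in>idxs n d. A x z * B z y)"

definition op_adj :: "gop \<Rightarrow> gop" where
  "op_adj A = (\<lambda>x y. cnj (A y x))"

definition op_id :: gop where
  "op_id = (\<lambda>x y. if x = y then 1 else 0)"

definition op_eq :: "nat \<Rightarrow> (nat \<Rightarrow> nat) \<Rightarrow> gop \<Rightarrow> gop \<Rightarrow> bool" where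
  "op_eq n d A B \<longleftrightarrow> (\<forall>x\<in>idxs n d. \<forall>y\<in>idxs n d. A x y = B x y)"

definition vnorm2 :: "nat \<Rightarrow> (nat \<Rightarrow> nat) \<Rightarrow> gvec \<Rightarrow> real" where
  "vnorm2 n d v = (\<Sum>x\<in>idxs n d. (cmod (v x))\<^sup>2)"

definition proj :: "nat \<Rightarrow> (nat \<Rightarrow> nat) \<Rightarrow> gvec \<Rightarrow> gop" where
  "proj n d v = (\<lambda>x y. v x * cnj (v y) / complex_of_real (vnorm2 n d v))"

definition reduced_dm :: "nat \<Rightarrow> (nat \<Rightarrow> nat) \<Rightarrow> gvec \<Rightarrow> nat \<Rightarrow> complex mat" where
  "reduced_dm n d v i = mat (d i) (d i) (\<lambda>(a, b).
     \<Sum>x\<in>idxs n d. \<Sum>y\<in>idxs n d.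
       if x i = a \<and> y i = b \<and> (\<forall>j. j \<noteq> i \<longrightarrow> x j = y j)
       then v x * cnj (v y) / complex_of_real (vnorm2 n d v) else 0)"

definition fully_entangled :: "nat \<Rightarrow> (nat \<Rightarrow> nat) \<Rightarrow> gvec \<Rightarrow> bool" where
  "fully_entangled n d v \<longleftrightarrow>
     (\<forall>i<n. vec_space.rank (d i) (reduced_dm n d v i :: complex mat) = d i)"

definition local_ops :: "nat \<Rightarrow> (nat \<Rightarrow> nat) \<Rightarrow> local_op \<Rightarrow> bool" where
  "local_ops n d K \<longleftrightarrow> (\<forall>j<n. K j \<in> carrier_mat (d j) (d j))"

definition local_invertible :: "nat \<Rightarrow> (nat \<Rightarrow> nat) \<Rightarrow> local_op \<Rightarrow> bool" where
  "local_invertible n d K \<longleftrightarrow> local_ops n d K \<and> (\<forall>j<n. invertible_mat (K j))"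

definition sep_kraus :: "nat \<Rightarrow> (nat \<Rightarrow> nat) \<Rightarrow> local_op list \<Rightarrow> bool" where
  "sep_kraus n d Ks \<longleftrightarrow> (\<forall>K\<in>set Ks. local_ops n d K) \<and>
     op_eq n d (\<lambda>x y. \<Sum>K\<leftarrow>Ks. op_mult n d (op_adj (tensor_op n K)) (tensor_op n K) x y) op_id"

definition apply_channel :: "nat \<Rightarrow> (nat \<Rightarrow> nat) \<Rightarrow> local_op list \<Rightarrow> gop \<Rightarrow> gop" where
  "apply_channel n d Ks \<rho> = (\<lambda>x y. \<Sum>K\<leftarrow>Ks.
     op_mult n d (op_mult n d (tensor_op n K) \<rho>) (op_adj (tensor_op n K)) x y)"

definition sep_transformable :: "nat \<Rightarrow> (nat \<Rightarrow> nat) \<Rightarrow> gvec \<Rightarrow> gvec \<Rightarrow> bool" where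
  "sep_transformable n d \<alpha> \<beta> \<longleftrightarrow>
     (\<exists>Ks. sep_kraus n d Ks \<and> op_eq n d (apply_channel n d Ks (proj n d \<alpha>)) (proj n d \<beta>))"

definition in_stabilizer :: "nat \<Rightarrow> (nat \<Rightarrow> nat) \<Rightarrow> gvec \<Rightarrow> local_op \<Rightarrow> bool" where
  "in_stabilizer n d \<psi> S \<longleftrightarrow> local_invertible n d S \<and>
     (\<forall>x\<in>idxs n d. op_apply n d (tensor_op n S) \<psi> x = \<psi> x)"

definition in_annihilator :: "nat \<Rightarrow> (nat \<Rightarrow> nat) \<Rightarrow> gvec \<Rightarrow> local_op \<Rightarrow> bool" where
  "in_annihilator n d \<chi> N \<longleftrightarrow> local_ops n d N \<and>
     (\<forall>x\<in>idxs n d. op_apply n d (tensor_op n N) \<chi> x = 0)"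

definition gram :: "nat \<Rightarrow> (nat \<Rightarrow> nat) \<Rightarrow> local_op \<Rightarrow> gop" where
  "gram n d K = op_mult n d (op_adj (tensor_op n K)) (tensor_op n K)"

end

theory Submission
  imports Defs
begin

lemma finite_idxs[simp]: "finite (idxs n d)"
  unfolding idxs_def by (simp add: finite_PiE)

lemma idxs_upd: "x \<in> idxs n d \<Longrightarrow> i < n \<Longrightarrow> a < d i \<Longrightarrow> x(i := a) \<in> idxs n d"
  unfolding idxs_def by (auto simp: PiE_iff extensional_def)

lemma idxs_lt: "x \<in> idxs n d \<Longrightarrow> j < n \<Longrightarrow> x j < d j"
  unfolding idxs_def by (auto simp: PiE_iff)

lemma idxs_eq: "x \<in> idxs n d \<Longrightarrow> y \<in> idxs n d \<Longrightarrow> (\<And>j. j < n \<Longrightarrow> x j = y j) \<Longrightarrow> x = y"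
  unfolding idxs_def by (metis PiE_ext lessThan_iff)

lemma idxs_0: "idxs 0 d = {\<lambda>_. undefined}"
  unfolding idxs_def by simp

lemma mult_entry:
  assumes "A \<in> carrier_mat m m" "B \<in> carrier_mat m m" "a < m" "b < m"
  shows "(A * B) $$ (a, b) = (\<Sum>c<m. A $$ (a, c) * B $$ (c, b))"
  using assms by (auto simp: index_mult_mat scalar_prod_def atLeast0LessThan intro!: sum.cong)

lemma tensor_mult:
  assumes A: "local_ops n d A" and B: "local_ops n d B" and x: "x \<in> idxs n d" and y: "y \<in> idxs n d"
  shows "op_mult n d (tensor_op n A) (tensor_op n B) x y = tensor_op n (\<lambda>j. A j * B j) x y"
proof -
  have "tensor_op n (\<lambda>j. A j * B j) x y = (\<Prod>j<n. \<Sum>c<d j. A j $$ (x j, c) * B j $$ (c, y j))"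
    unfolding tensor_op_def using A B x y
    by (intro prod.cong refl mult_entry) (auto simp: local_ops_def idxs_lt)
  also have "\<dots> = (\<Sum>z\<in>idxs n d. \<Prod>j<n. A j $$ (x j, z j) * B j $$ (z j, y j))"
    unfolding idxs_def by (rule prod_sum_PiE) auto
  also have "\<dots> = op_mult n d (tensor_op n A) (tensor_op n B) x y"
    unfolding op_mult_def tensor_op_def by (simp add: prod.distrib)
  finally show ?thesis by simp
qed

lemma tensor_id:
  assumes x: "x \<in> idxs n d" and y: "y \<in> idxs n d"
  shows "tensor_op n (\<lambda>j. 1\<^sub>m (d j)) x y = op_id x y"
proof (cases "x = y")
  case True
  then show ?thesis using x by (simp add: tensor_op_def op_id_def idxs_lt)
next
  case False
  then obtain j where "j < n" "x j \<noteq> y j" using idxs_eq[OF x y] by blast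
  then show ?thesis using x y False
    by (auto simp: tensor_op_def op_id_def idxs_lt intro!: prod_zero)
qed

lemma tensor_scale:
  assumes "0 < n" "local_ops n d A" "x \<in> idxs n d" "y \<in> idxs n d"
  shows "tensor_op n (\<lambda>j. if j = 0 then a \<cdot>\<^sub>m A j else A j) x y = a * tensor_op n A x y"
proof -
  have "{..<n} = insert 0 {1..<n}" using assms by auto
  moreover have "(a \<cdot>\<^sub>m A 0) $$ (x 0, y 0) = a * A 0 $$ (x 0, y 0)"
    using assms by (auto simp: local_ops_def idxs_lt)
  ultimately show ?thesis unfolding tensor_op_def by simp
qed

lemma op_mult_assoc:
  "op_mult n d (op_mult n d A B) C x y = op_mult n d A (op_mult n d B C) x y"
  unfolding op_mult_def by (simp only: sum_distrib_left sum_distrib_right mult.assoc) (rule sum.swap)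

lemma op_apply_mult:
  "op_apply n d (op_mult n d A B) v x = op_apply n d A (op_apply n d B v) x"
  unfolding op_mult_def op_apply_def by (simp only: sum_distrib_left sum_distrib_right mult.assoc) (rule sum.swap)

lemma op_adj_mult: "op_adj (op_mult n d A B) = op_mult n d (op_adj B) (op_adj A)"
  unfolding op_mult_def op_adj_def by (auto simp: mult.commute)

lemma op_mult_cong:
  assumes "\<And>x z. x \<in> idxs n d \<Longrightarrow> z \<in> idxs n d \<Longrightarrow> A x z = A' x z"
    "\<And>z y. z \<in> idxs n d \<Longrightarrow> y \<in> idxs n d \<Longrightarrow> B z y = B' z y"
    "x \<in> idxs n d" "y \<in> idxs n d"
  shows "op_mult n d A B x y = op_mult n d A' B' x y"
  unfolding op_mult_def using assms by (intro sum.cong) auto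

lemma op_apply_cong:
  assumes "\<And>z. z \<in> idxs n d \<Longrightarrow> A x z = A' x z" "\<And>z. z \<in> idxs n d \<Longrightarrow> v z = v' z"
  shows "op_apply n d A v x = op_apply n d A' v' x"
  unfolding op_apply_def using assms by (intro sum.cong) auto

lemma op_mult_id_left: "x \<in> idxs n d \<Longrightarrow> op_mult n d op_id A x y = A x y"
  unfolding op_mult_def op_id_def
  by (subst sum.cong[OF refl, of _ _ "\<lambda>z. if x = z then A z y else 0"]) auto

lemma op_mult_id_right: "y \<in> idxs n d \<Longrightarrow> op_mult n d A op_id x y = A x y"
  unfolding op_mult_def op_id_def
  by (subst sum.cong[OF refl, of _ _ "\<lambda>z. if z = y then A x z else 0"]) auto

lemma op_apply_id: "x \<in> idxs n d \<Longrightarrow> op_apply n d op_id v x = v x"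
  unfolding op_apply_def op_id_def
  by (subst sum.cong[OF refl, of _ _ "\<lambda>z. if x = z then v z else 0"]) auto

lemma op_mult_sum_list_right:
  "op_mult n d A (\<lambda>x y. \<Sum>k\<leftarrow>ks. F k x y) x y = (\<Sum>k\<leftarrow>ks. op_mult n d A (F k) x y)"
  by (induction ks) (auto simp: op_mult_def sum_distrib_left sum_distrib_right distrib_left sum.distrib)

lemma op_mult_sum_list_left:
  "op_mult n d (\<lambda>x y. \<Sum>k\<leftarrow>ks. F k x y) A x y = (\<Sum>k\<leftarrow>ks. op_mult n d (F k) A x y)"
  by (induction ks) (auto simp: op_mult_def sum_distrib_left sum_distrib_right distrib_right sum.distrib)

lemma op_mult_scale_left: "op_mult n d (\<lambda>x y. a * F x y) A x y = a * op_mult n d F A x y"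
  by (simp add: op_mult_def sum_distrib_left mult.assoc)

lemma op_mult_scale_right: "op_mult n d A (\<lambda>x y. a * F x y) x y = a * op_mult n d A F x y"
  by (simp add: op_mult_def sum_distrib_left mult.assoc mult.left_commute)

lemma op_mult_add_left: "op_mult n d (\<lambda>x y. F x y + F' x y) A x y = op_mult n d F A x y + op_mult n d F' A x y"
  by (simp add: op_mult_def distrib_right sum.distrib)

lemma op_mult_add_right: "op_mult n d A (\<lambda>x y. F x y + F' x y) x y = op_mult n d A F x y + op_mult n d A F' x y"
  by (simp add: op_mult_def distrib_left sum.distrib)

lemma det_nz_invertible:
  assumes A: "(A :: complex mat) \<in> carrier_mat m m" and dA: "det A \<noteq> 0"
  shows "invertible_mat A"
proof -
  have "A \<in> Units (ring_mat TYPE(complex) m undefined)"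
    by (rule det_non_zero_imp_unit[OF A dA])
  then obtain B where B: "B \<in> carrier_mat m m" "B * A = 1\<^sub>m m" "A * B = 1\<^sub>m m"
    unfolding Units_def ring_mat_def by auto
  then show ?thesis using A unfolding invertible_mat_def inverts_mat_def square_mat.simps
    by auto
qed

lemma invertible_inv:
  assumes "invertible_mat A" "A \<in> carrier_mat m m"
  obtains B where "B \<in> carrier_mat m m" "A * B = 1\<^sub>m m" "B * A = 1\<^sub>m m"
proof -
  obtain B where AB: "A * B = 1\<^sub>m m" and BA: "B * A = 1\<^sub>m (dim_row B)"
    using assms unfolding invertible_mat_def inverts_mat_def by auto
  have "dim_col B = m" using arg_cong[OF AB, of dim_col] by simp
  moreover have "dim_row B = m" using arg_cong[OF BA, of dim_col] assms(2) by simp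
  ultimately show ?thesis using that AB BA by auto
qed

lemma sum_upd_delta:
  assumes x: "x \<in> idxs n d" and i: "i < n" and b: "b < d i"
  shows "(\<Sum>y\<in>idxs n d. if x i = a \<and> y i = b \<and> (\<forall>j. j \<noteq> i \<longrightarrow> x j = y j) then F y else 0)
       = (if x i = a then F (x(i := b)) else 0)"
proof -
  have "\<And>y. (x i = a \<and> y i = b \<and> (\<forall>j. j \<noteq> i \<longrightarrow> x j = y j)) \<longleftrightarrow> (x i = a \<and> y = x(i := b))"
    by auto
  then have "(\<Sum>y\<in>idxs n d. if x i = a \<and> y i = b \<and> (\<forall>j. j \<noteq> i \<longrightarrow> x j = y j) then F y else 0)
     = (\<Sum>y\<in>idxs n d. if x i = a then (if y = x(i := b) then F y else 0) else 0)"
    by (intro sum.cong) auto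
  also have "\<dots> = (if x i = a then F (x(i := b)) else 0)"
    using idxs_upd[OF x i b] by (cases "x i = a") (auto simp: sum.delta')
  finally show ?thesis .
qed

lemma stab_invertible:
  assumes ent: "fully_entangled n d \<psi>" and S: "local_ops n d S"
    and fx: "\<forall>x\<in>idxs n d. op_apply n d (tensor_op n S) \<psi> x = \<psi> x" and i: "i < n"
  shows "invertible_mat (S i)"
proof (rule ccontr)
  assume ninv: "\<not> invertible_mat (S i)"
  have Si: "S i \<in> carrier_mat (d i) (d i)" using S i by (auto simp: local_ops_def)
  have "det (S i) = 0" using ninv det_nz_invertible[OF Si] by auto
  then have "det (transpose_mat (S i)) = 0" using det_transpose[OF Si] by simp
  then obtain v where v: "v \<in> carrier_vec (d i)" "v \<noteq> 0\<^sub>v (d i)" "transpose_mat (S i) *\<^sub>v v = 0\<^sub>v (d i)"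
    using det_0_iff_vec_prod_zero[of "transpose_mat (S i)" "d i"] Si by auto
  have col0: "(\<Sum>a<d i. v $ a * S i $$ (a, b)) = 0" if b: "b < d i" for b
  proof -
    have "(transpose_mat (S i) *\<^sub>v v) $ b = 0" using v(3) b by simp
    then show ?thesis using Si v(1) b
      by (auto simp: mult_mat_vec_def scalar_prod_def atLeast0LessThan mult.commute)
  qed
  let ?I = "idxs n d"
  have kill: "(\<Sum>a<d i. v $ a * \<psi> (x(i := a))) = 0" if x: "x \<in> ?I" for x
  proof -
    let ?R = "\<lambda>y. \<Prod>j\<in>{..<n} - {i}. S j $$ (x j, y j)"
    have "\<psi> (x(i := a)) = (\<Sum>y\<in>?I. S i $$ (a, y i) * ?R y * \<psi> y)" if a: "a < d i" for a
    proof -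
      have "\<psi> (x(i := a)) = op_apply n d (tensor_op n S) \<psi> (x(i := a))"
        using fx idxs_upd[OF x i a] by simp
      also have "\<dots> = (\<Sum>y\<in>?I. S i $$ (a, y i) * ?R y * \<psi> y)"
        unfolding op_apply_def tensor_op_def
      proof (intro sum.cong refl)
        fix y
        have "(\<Prod>j<n. S j $$ ((x(i := a)) j, y j)) = S i $$ (a, y i) * (\<Prod>j\<in>{..<n} - {i}. S j $$ ((x(i := a)) j, y j))"
          using i by (subst prod.remove[of _ i]) auto
        also have "(\<Prod>j\<in>{..<n} - {i}. S j $$ ((x(i := a)) j, y j)) = ?R y"
          by (intro prod.cong) auto
        finally show "(\<Prod>j<n. S j $$ ((x(i := a)) j, y j)) * \<psi> y = S i $$ (a, y i) * ?R y * \<psi> y"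
          by simp
      qed
      finally show ?thesis .
    qed
    then have "(\<Sum>a<d i. v $ a * \<psi> (x(i := a))) = (\<Sum>a<d i. \<Sum>y\<in>?I. v $ a * S i $$ (a, y i) * ?R y * \<psi> y)"
      by (simp add: sum_distrib_left mult.assoc)
    also have "\<dots> = (\<Sum>y\<in>?I. (\<Sum>a<d i. v $ a * S i $$ (a, y i)) * (?R y * \<psi> y))"
      by (subst sum.swap) (simp add: sum_distrib_right mult.assoc)
    also have "\<dots> = 0"
      by (intro sum.neutral ballI) (simp add: col0 idxs_lt i)
    finally show ?thesis .
  qed
  define u where "u = vec (d i) (\<lambda>b. cnj (v $ b))"
  define N where "N = complex_of_real (vnorm2 n d \<psi>)"
  let ?rho = "reduced_dm n d \<psi> i"
  have rhoC: "?rho \<in> carrier_mat (d i) (d i)" by (simp add: reduced_dm_def)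
  have entry: "?rho $$ (a, b) = (\<Sum>x\<in>?I. if x i = a then \<psi> x * cnj (\<psi> (x(i := b))) / N else 0)"
    if a: "a < d i" and b: "b < d i" for a b
  proof -
    have "?rho $$ (a, b) = (\<Sum>x\<in>?I. \<Sum>y\<in>?I. if x i = a \<and> y i = b \<and> (\<forall>j. j \<noteq> i \<longrightarrow> x j = y j)
            then \<psi> x * cnj (\<psi> y) / N else 0)"
      using a b unfolding N_def by (simp add: reduced_dm_def)
    also have "\<dots> = (\<Sum>x\<in>?I. if x i = a then \<psi> x * cnj (\<psi> (x(i := b))) / N else 0)"
    proof (intro sum.cong refl)
      fix x assume "x \<in> ?I"
      then show "(\<Sum>y\<in>?I. if x i = a \<and> y i = b \<and> (\<forall>j. j \<noteq> i \<longrightarrow> x j = y j)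
            then \<psi> x * cnj (\<psi> y) / N else 0) = (if x i = a then \<psi> x * cnj (\<psi> (x(i := b))) / N else 0)"
        using i b by (rule sum_upd_delta[where n=n and d=d and i=i and b=b and a=a])
    qed
    finally show ?thesis .
  qed
  have "?rho *\<^sub>v u = 0\<^sub>v (d i)"
  proof (rule eq_vecI)
    show "dim_vec (?rho *\<^sub>v u) = dim_vec (0\<^sub>v (d i))" using rhoC by simp
    fix a assume "a < dim_vec (0\<^sub>v (d i))"
    then have a: "a < d i" by simp
    have "(?rho *\<^sub>v u) $ a = (\<Sum>b<d i. ?rho $$ (a, b) * cnj (v $ b))"
      using a rhoC by (auto simp: mult_mat_vec_def scalar_prod_def u_def atLeast0LessThan)
    also have "\<dots> = (\<Sum>b<d i. \<Sum>x\<in>?I. if x i = a then \<psi> x / N * cnj (v $ b * \<psi> (x(i := b))) else 0)"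
      by (intro sum.cong refl) (simp add: entry a sum_distrib_right, rule sum.cong, auto)
    also have "\<dots> = (\<Sum>x\<in>?I. if x i = a then \<psi> x / N * cnj (\<Sum>b<d i. v $ b * \<psi> (x(i := b))) else 0)"
      by (subst sum.swap) (auto simp: sum_distrib_left intro!: sum.cong)
    also have "\<dots> = 0" by (intro sum.neutral) (simp add: kill)
    finally show "(?rho *\<^sub>v u) $ a = 0\<^sub>v (d i) $ a" using a by simp
  qed
  moreover have "u \<noteq> 0\<^sub>v (d i)"
  proof
    assume "u = 0\<^sub>v (d i)"
    then have "\<And>b. b < d i \<Longrightarrow> v $ b = 0"
      unfolding u_def by (metis index_vec index_zero_vec(1) complex_cnj_zero_iff)
    then have "v = 0\<^sub>v (d i)" using v(1) by (intro eq_vecI) auto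
    with v(2) show False by simp
  qed
  moreover have "u \<in> carrier_vec (d i)" by (simp add: u_def)
  ultimately have "det ?rho = 0" using det_0_iff_vec_prod_zero[OF rhoC] by blast
  then have "vec_space.rank (d i) ?rho \<noteq> d i" using vec_space.det_rank_iff[OF rhoC] by simp
  then show False using ent i unfolding fully_entangled_def by auto
qed

definition ip :: "nat \<Rightarrow> (nat \<Rightarrow> nat) \<Rightarrow> gvec \<Rightarrow> gvec \<Rightarrow> complex" where
  "ip n d u v = (\<Sum>x\<in>idxs n d. cnj (u x) * v x)"

lemma ip_self: "ip n d u u = complex_of_real (vnorm2 n d u)"
  unfolding ip_def vnorm2_def of_real_sum
  by (intro sum.cong refl) (subst complex_norm_square, simp add: mult.commute)

lemma vnorm2_nonneg: "0 \<le> vnorm2 n d u"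
  unfolding vnorm2_def by (simp add: sum_nonneg)

lemma vnorm2_zero: "vnorm2 n d u = 0 \<Longrightarrow> x \<in> idxs n d \<Longrightarrow> u x = 0"
  unfolding vnorm2_def by (subst (asm) sum_nonneg_eq_0_iff) auto

lemma sum_list_swap:
  "(\<Sum>x\<in>A. \<Sum>k\<leftarrow>ks. F k x) = (\<Sum>k\<leftarrow>ks. \<Sum>x\<in>A. F k x)"
  by (induction ks) (auto simp: sum.distrib)

lemma sum_list_mult_left: "c * (\<Sum>k\<leftarrow>ks. F k) = (\<Sum>k\<leftarrow>ks. c * F k)" for c :: "'a::semiring_0"
  by (induction ks) (auto simp: distrib_left)

lemma sum_list_div: "(\<Sum>k\<leftarrow>ks. F k) / c = (\<Sum>k\<leftarrow>ks. F k / c)" for c :: "'a::field"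
  by (induction ks) (auto simp: add_divide_distrib)

lemma channel_term:
  "op_mult n d (op_mult n d A (\<lambda>x y. u x * cnj (u y) / c)) (op_adj A) x y
     = op_apply n d A u x * cnj (op_apply n d A u y) / c"
proof -
  let ?I = "idxs n d"
  have "op_mult n d (op_mult n d A (\<lambda>x y. u x * cnj (u y) / c)) (op_adj A) x y
     = (\<Sum>z\<in>?I. \<Sum>w\<in>?I. A x w * u w * (cnj (u z) * cnj (A y z)) / c)"
    unfolding op_mult_def op_adj_def by (simp add: sum_distrib_right mult.assoc)
  also have "\<dots> = (\<Sum>w\<in>?I. \<Sum>z\<in>?I. A x w * u w * (cnj (u z) * cnj (A y z)) / c)"
    by (rule sum.swap)
  also have "\<dots> = op_apply n d A u x * cnj (op_apply n d A u y) / c"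
    unfolding op_apply_def by (simp add: sum_product sum_divide_distrib mult.commute)
  finally show ?thesis .
qed

lemma quad_term:
  "(\<Sum>x\<in>idxs n d. \<Sum>y\<in>idxs n d. cnj (w x) * w y * (f x * cnj (f y) / Na))
    = ip n d w f * cnj (ip n d w f) / Na"
  unfolding ip_def cnj_sum sum_product sum_divide_distrib complex_cnj_mult complex_cnj_cnj
  by (intro sum.cong refl) (simp add: algebra_simps)

lemma quad_identity:
  assumes E: "\<forall>x\<in>idxs n d. \<forall>y\<in>idxs n d.
      (\<Sum>k\<leftarrow>ks. f k x * cnj (f k y) / Na) = b x * cnj (b y) / Nb"
  shows "(\<Sum>k\<leftarrow>ks. ip n d w (f k) * cnj (ip n d w (f k)) / Na) = ip n d w b * cnj (ip n d w b) / Nb"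
proof -
  let ?I = "idxs n d"
  have "(\<Sum>x\<in>?I. \<Sum>y\<in>?I. cnj (w x) * w y * (\<Sum>k\<leftarrow>ks. f k x * cnj (f k y) / Na))
      = (\<Sum>x\<in>?I. \<Sum>y\<in>?I. cnj (w x) * w y * (b x * cnj (b y) / Nb))"
    using E by (intro sum.cong refl) auto
  moreover have "(\<Sum>x\<in>?I. \<Sum>y\<in>?I. cnj (w x) * w y * (\<Sum>k\<leftarrow>ks. f k x * cnj (f k y) / Na))
      = (\<Sum>k\<leftarrow>ks. \<Sum>x\<in>?I. \<Sum>y\<in>?I. cnj (w x) * w y * (f k x * cnj (f k y) / Na))"
    by (simp only: sum_list_mult_left sum_list_swap)
  ultimately show ?thesis by (simp only: quad_term)
qed

lemma ip_diff_right: "ip n d u (\<lambda>x. v x - c * v' x) = ip n d u v - c * ip n d u v'"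
  unfolding ip_def by (simp add: algebra_simps sum_subtractf sum_distrib_left)

lemma ip_cnj: "cnj (ip n d u v) = ip n d v u"
  unfolding ip_def by (simp add: mult.commute)

lemma sum_list_of_real: "(\<Sum>k\<leftarrow>ks. complex_of_real (g k)) = complex_of_real (\<Sum>k\<leftarrow>ks. g k)"
  by (induction ks) auto

lemma mult_cnj_real: "z * cnj z = complex_of_real ((cmod z)\<^sup>2)"
  by (rule complex_norm_square[symmetric])

lemma sum_list_mult_right: "(\<Sum>k\<leftarrow>ks. F k * c) = (\<Sum>k\<leftarrow>ks. F k) * c" for c :: "'a::semiring_0"
  by (induction ks) (auto simp: distrib_right)

lemma proportional:
  assumes E: "\<forall>x\<in>idxs n d. \<forall>y\<in>idxs n d.
      (\<Sum>k\<leftarrow>ks. f k x * cnj (f k y) / complex_of_real ra) = b x * cnj (b y) / complex_of_real (vnorm2 n d b)"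
    and ra: "ra > 0" and rb: "vnorm2 n d b > 0" and k: "k \<in> set ks" and x: "x \<in> idxs n d"
  shows "f k x = (ip n d b (f k) / ip n d b b) * b x"
proof -
  define c where "c = ip n d b (f k) / ip n d b b"
  define w where "w = (\<lambda>x. f k x - c * b x)"
  have bb: "ip n d b b \<noteq> 0" using rb by (simp add: ip_self)
  have "ip n d b w = 0" unfolding w_def ip_diff_right c_def using bb by simp
  then have wb: "ip n d w b = 0" using ip_cnj[of n d b w] by simp
  have "(\<Sum>k\<leftarrow>ks. ip n d w (f k) * cnj (ip n d w (f k)) / complex_of_real ra) = 0"
    using quad_identity[OF E, of w] wb by simp
  moreover have "(\<Sum>k\<leftarrow>ks. ip n d w (f k) * cnj (ip n d w (f k)) / complex_of_real ra)
      = (\<Sum>k\<leftarrow>ks. complex_of_real ((cmod (ip n d w (f k)))\<^sup>2 / ra))"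
    by (simp only: mult_cnj_real of_real_divide)
  ultimately have "complex_of_real (\<Sum>k\<leftarrow>ks. (cmod (ip n d w (f k)))\<^sup>2 / ra) = 0"
    by (simp only: sum_list_of_real)
  then have "(\<Sum>k\<leftarrow>ks. (cmod (ip n d w (f k)))\<^sup>2 / ra) = 0" by simp
  then have "\<forall>z\<in>set (map (\<lambda>k. (cmod (ip n d w (f k)))\<^sup>2 / ra) ks). z = 0"
    using ra by (subst (asm) sum_list_nonneg_eq_0_iff) auto
  then have "(cmod (ip n d w (f k)))\<^sup>2 / ra = 0" using k by auto
  then have wf: "ip n d w (f k) = 0" using ra by simp
  have "ip n d w w = ip n d w (f k) - c * ip n d w b"
    unfolding w_def by (rule ip_diff_right)
  then have "ip n d w w = 0" using wf wb by simp
  then have "vnorm2 n d w = 0" by (simp add: ip_self)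
  then have "w x = 0" using vnorm2_zero x by blast
  then show ?thesis unfolding w_def c_def by simp
qed

lemma coeff_sum:
  assumes E: "\<forall>x\<in>idxs n d. \<forall>y\<in>idxs n d.
      (\<Sum>k\<leftarrow>ks. f k x * cnj (f k y) / complex_of_real ra) = b x * cnj (b y) / complex_of_real (vnorm2 n d b)"
    and ra: "ra > 0" and rb: "vnorm2 n d b > 0"
  shows "(\<Sum>k\<leftarrow>ks. (cmod (ip n d b (f k) / ip n d b b))\<^sup>2) = ra / vnorm2 n d b"
proof -
  let ?rb = "vnorm2 n d b"
  have "(\<Sum>k\<leftarrow>ks. ip n d b (f k) * cnj (ip n d b (f k)) / complex_of_real ra)
     = ip n d b b * cnj (ip n d b b) / complex_of_real ?rb"
    by (rule quad_identity[OF E])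
  also have "\<dots> = complex_of_real ?rb" using rb by (simp add: ip_self power2_eq_square)
  finally have eq: "(\<Sum>k\<leftarrow>ks. ip n d b (f k) * cnj (ip n d b (f k)) / complex_of_real ra) = complex_of_real ?rb" .
  have "\<And>k. ip n d b (f k) * cnj (ip n d b (f k)) / complex_of_real ra
      = complex_of_real ((cmod (ip n d b (f k) / ip n d b b))\<^sup>2 * (?rb\<^sup>2 / ra))"
  proof -
    fix k
    have "(cmod (ip n d b (f k) / ip n d b b))\<^sup>2 * (?rb\<^sup>2 / ra) = (cmod (ip n d b (f k)))\<^sup>2 / ra"
      using rb by (simp add: ip_self norm_divide power_divide)
    note r = this
    show "ip n d b (f k) * cnj (ip n d b (f k)) / complex_of_real ra
      = complex_of_real ((cmod (ip n d b (f k) / ip n d b b))\<^sup>2 * (?rb\<^sup>2 / ra))"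
      unfolding r by (simp only: mult_cnj_real of_real_divide)
  qed
  then have "complex_of_real (\<Sum>k\<leftarrow>ks. (cmod (ip n d b (f k) / ip n d b b))\<^sup>2 * (?rb\<^sup>2 / ra)) = complex_of_real ?rb"
    using eq by (simp only: sum_list_of_real)
  then have "(\<Sum>k\<leftarrow>ks. (cmod (ip n d b (f k) / ip n d b b))\<^sup>2 * (?rb\<^sup>2 / ra)) = ?rb"
    using of_real_eq_iff by blast
  then have "(\<Sum>k\<leftarrow>ks. (cmod (ip n d b (f k) / ip n d b b))\<^sup>2) * (?rb\<^sup>2 / ra) = ?rb"
    by (simp only: sum_list_mult_right)
  then show ?thesis using ra rb by (simp add: field_simps power2_eq_square)
qed

lemma op_mult_assoc_fun: "op_mult n d (op_mult n d A B) C = op_mult n d A (op_mult n d B C)"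
  by (intro ext) (rule op_mult_assoc)

lemma op_mult_add_left_fun: "op_mult n d (\<lambda>x y. F x y + F' x y) A = (\<lambda>x y. op_mult n d F A x y + op_mult n d F' A x y)"
  by (intro ext) (rule op_mult_add_left)

lemma op_mult_add_right_fun: "op_mult n d A (\<lambda>x y. F x y + F' x y) = (\<lambda>x y. op_mult n d A F x y + op_mult n d A F' x y)"
  by (intro ext) (rule op_mult_add_right)

lemma op_mult_scale_left_fun: "op_mult n d (\<lambda>x y. a * F x y) A = (\<lambda>x y. a * op_mult n d F A x y)"
  by (intro ext) (rule op_mult_scale_left)

lemma op_mult_scale_right_fun: "op_mult n d A (\<lambda>x y. a * F x y) = (\<lambda>x y. a * op_mult n d A F x y)"
  by (intro ext) (rule op_mult_scale_right)

lemma op_mult_sum_list_left_fun: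
  "op_mult n d (\<lambda>x y. \<Sum>k\<leftarrow>ks. F k x y) A = (\<lambda>x y. \<Sum>k\<leftarrow>ks. op_mult n d (F k) A x y)"
  by (intro ext) (rule op_mult_sum_list_left)

lemma op_mult_sum_list_right_fun:
  "op_mult n d A (\<lambda>x y. \<Sum>k\<leftarrow>ks. F k x y) = (\<lambda>x y. \<Sum>k\<leftarrow>ks. op_mult n d A (F k) x y)"
  by (intro ext) (rule op_mult_sum_list_right)

lemma op_adj_scale: "op_adj (\<lambda>x y. a * F x y) = (\<lambda>x y. cnj a * op_adj F x y)"
  by (simp add: op_adj_def)

lemma op_adj_id: "op_adj op_id = op_id"
  by (auto simp: op_adj_def op_id_def intro!: ext)

lemma op_apply_scale_vec: "op_apply n d A (\<lambda>x. c * v x) x = c * op_apply n d A v x"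
  by (simp add: op_apply_def sum_distrib_left mult.left_commute)

lemma op_apply_scale_op: "op_apply n d (\<lambda>x y. c * A x y) v x = c * op_apply n d A v x"
  by (simp add: op_apply_def sum_distrib_left mult.assoc)

lemma tensor_cong: "(\<And>j. j < n \<Longrightarrow> A j = B j) \<Longrightarrow> tensor_op n A = tensor_op n B"
  unfolding tensor_op_def by (intro ext prod.cong) auto

lemma local_ops_mult: "local_ops n d A \<Longrightarrow> local_ops n d B \<Longrightarrow> local_ops n d (\<lambda>j. A j * B j)"
  unfolding local_ops_def by auto

lemma local_ops_scale: "local_ops n d A \<Longrightarrow> local_ops n d (\<lambda>j. if j = 0 then a \<cdot>\<^sub>m A j else A j)"
  unfolding local_ops_def by auto

lemma tensor_inv:
  assumes "local_ops n d A" "local_ops n d B" "\<forall>j<n. A j * B j = 1\<^sub>m (d j)"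
    "x \<in> idxs n d" "y \<in> idxs n d"
  shows "op_mult n d (tensor_op n A) (tensor_op n B) x y = op_id x y"
proof -
  have "op_mult n d (tensor_op n A) (tensor_op n B) x y = tensor_op n (\<lambda>j. A j * B j) x y"
    by (rule tensor_mult[OF assms(1,2,4,5)])
  also have "tensor_op n (\<lambda>j. A j * B j) = tensor_op n (\<lambda>j. 1\<^sub>m (d j))"
    using assms(3) by (intro tensor_cong) auto
  finally show ?thesis using tensor_id assms(4,5) by simp
qed

lemma apply_tensor_mult:
  assumes "local_ops n d A" "local_ops n d B" "x \<in> idxs n d"
  shows "op_apply n d (tensor_op n (\<lambda>j. A j * B j)) v x = op_apply n d (tensor_op n A) (op_apply n d (tensor_op n B) v) x"
proof -
  have "op_apply n d (tensor_op n (\<lambda>j. A j * B j)) v x = op_apply n d (op_mult n d (tensor_op n A) (tensor_op n B)) v x"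
    using tensor_mult[OF assms(1,2) assms(3)] by (intro op_apply_cong) auto
  then show ?thesis by (simp add: op_apply_mult)
qed

lemma apply_inv:
  assumes "local_ops n d A" "local_ops n d B" "\<forall>j<n. A j * B j = 1\<^sub>m (d j)" "x \<in> idxs n d"
  shows "op_apply n d (tensor_op n A) (op_apply n d (tensor_op n B) v) x = v x"
proof -
  have "op_apply n d (tensor_op n A) (op_apply n d (tensor_op n B) v) x
      = op_apply n d (op_mult n d (tensor_op n A) (tensor_op n B)) v x"
    by (simp add: op_apply_mult)
  also have "\<dots> = op_apply n d op_id v x"
    using tensor_inv[OF assms(1,2,3) assms(4)] by (intro op_apply_cong) auto
  finally show ?thesis using op_apply_id assms(4) by simp
qed

lemma vnorm2_pos: "x \<in> idxs n d \<Longrightarrow> u x \<noteq> 0 \<Longrightarrow> vnorm2 n d u > 0"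
  using vnorm2_nonneg vnorm2_zero by (metis less_eq_real_def)

lemma sum_list_filter_split:
  "(\<Sum>k\<leftarrow>filter P ks. F k) + (\<Sum>k\<leftarrow>filter (\<lambda>k. \<not> P k) ks. F k) = (\<Sum>k\<leftarrow>ks. F k)"
  for F :: "'a \<Rightarrow> 'b::comm_monoid_add"
  by (induction ks) (auto simp: add.left_commute add.assoc)

lemma sum_list_cong': "(\<And>k. k \<in> set ks \<Longrightarrow> F k = F' k) \<Longrightarrow> (\<Sum>k\<leftarrow>ks. F k) = (\<Sum>k\<leftarrow>ks. F' k)"
  by (metis map_cong)

lemma psi_nonzero:
  assumes ent: "fully_entangled n d \<psi>" and n: "0 < n" and d: "0 < d 0"
  shows "\<exists>x\<in>idxs n d. \<psi> x \<noteq> 0"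
proof (rule ccontr)
  assume "\<not> ?thesis"
  then have z: "\<forall>x\<in>idxs n d. \<psi> x = 0" by auto
  have "reduced_dm n d \<psi> 0 = 0\<^sub>m (d 0) (d 0)"
    unfolding reduced_dm_def using z by (intro eq_matI) (auto intro!: sum.neutral)
  then have "vec_space.rank (d 0) (reduced_dm n d \<psi> 0) = 0" by (simp add: vec_space.rank_0I)
  then show False using ent n d unfolding fully_entangled_def by auto
qed

lemma local_inverse:
  assumes "local_invertible n d g"
  shows "\<exists>ginv. local_ops n d ginv \<and> (\<forall>j<n. g j * ginv j = 1\<^sub>m (d j) \<and> ginv j * g j = 1\<^sub>m (d j))"
proof -
  have "\<forall>j. \<exists>B. j < n \<longrightarrow> B \<in> carrier_mat (d j) (d j) \<and> g j * B = 1\<^sub>m (d j) \<and> B * g j = 1\<^sub>m (d j)"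
  proof
    fix j
    show "\<exists>B. j < n \<longrightarrow> B \<in> carrier_mat (d j) (d j) \<and> g j * B = 1\<^sub>m (d j) \<and> B * g j = 1\<^sub>m (d j)"
    proof (cases "j < n")
      case True
      then have "invertible_mat (g j)" "g j \<in> carrier_mat (d j) (d j)"
        using assms unfolding local_invertible_def local_ops_def by auto
      then obtain B where "B \<in> carrier_mat (d j) (d j)" "g j * B = 1\<^sub>m (d j)" "B * g j = 1\<^sub>m (d j)"
        by (rule invertible_inv)
      then show ?thesis by blast
    qed auto
  qed
  then obtain ginv where "\<forall>j. j < n \<longrightarrow> ginv j \<in> carrier_mat (d j) (d j) \<and> g j * ginv j = 1\<^sub>m (d j) \<and> ginv j * g j = 1\<^sub>m (d j)"
    by (metis (no_types))
  then show ?thesis unfolding local_ops_def by blast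
qed

lemma nonzero_image:
  assumes "local_ops n d A" "local_ops n d B" "\<forall>j<n. B j * A j = 1\<^sub>m (d j)" "xz \<in> idxs n d" "\<psi> xz \<noteq> 0"
  shows "vnorm2 n d (op_apply n d (tensor_op n A) \<psi>) > 0"
proof (rule ccontr)
  assume "\<not> ?thesis"
  then have "vnorm2 n d (op_apply n d (tensor_op n A) \<psi>) = 0" using vnorm2_nonneg by (metis less_eq_real_def)
  then have z: "\<forall>x\<in>idxs n d. op_apply n d (tensor_op n A) \<psi> x = 0" using vnorm2_zero by blast
  have "op_apply n d (tensor_op n B) (op_apply n d (tensor_op n A) \<psi>) xz = \<psi> xz"
    by (rule apply_inv[OF assms(2,1,3,4)])
  moreover have "op_apply n d (tensor_op n B) (op_apply n d (tensor_op n A) \<psi>) xz = 0"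
    unfolding op_apply_def[of n d "tensor_op n B"] using z by (simp add: sum.neutral)
  ultimately show False using assms(5) by simp
qed

lemma gram_assoc:
  "op_mult n d (op_mult n d (op_adj A) (op_mult n d (op_adj B) B)) A
   = op_mult n d (op_adj (op_mult n d B A)) (op_mult n d B A)"
  by (simp only: op_adj_mult op_mult_assoc_fun)

lemma forward:
  fixes n :: nat and d :: "nat \<Rightarrow> nat" and \<psi> :: gvec and g h :: local_op
  assumes n: "0 < n" and ent: "fully_entangled n d \<psi>"
    and g: "local_invertible n d g" and h: "local_invertible n d h"
    and xz: "xz \<in> idxs n d" and psi0: "\<psi> xz \<noteq> 0"
    and sep: "sep_transformable n d (op_apply n d (tensor_op n g) \<psi>) (op_apply n d (tensor_op n h) \<psi>)"
  shows "(let G = gram n d g; H = gram n d h;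
         r = vnorm2 n d (op_apply n d (tensor_op n h) \<psi>) / vnorm2 n d (op_apply n d (tensor_op n g) \<psi>)
     in \<exists>(pS :: (real \<times> local_op) list) (Ns :: local_op list).
          (\<forall>(p, S)\<in>set pS. 0 \<le> p \<and> in_stabilizer n d \<psi> S) \<and>
          (\<Sum>(p, S)\<leftarrow>pS. p) = 1 \<and>
          (\<forall>N\<in>set Ns. in_annihilator n d (op_apply n d (tensor_op n g) \<psi>) N) \<and>
          op_eq n d
            (\<lambda>x y. complex_of_real (1 / r) *
                      (\<Sum>(p, S)\<leftarrow>pS. complex_of_real p *
                         op_mult n d (op_mult n d (op_adj (tensor_op n S)) H) (tensor_op n S) x y)
                   + op_mult n d (op_mult n d (op_adj (tensor_op n g))
                        (\<lambda>x' y'. \<Sum>N\<leftarrow>Ns. gram n d N x' y')) (tensor_op n g) x y)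
            G)"
proof -
  let ?I = "idxs n d"
  let ?T = "tensor_op n"
  define \<alpha> where "\<alpha> = op_apply n d (?T g) \<psi>"
  define \<beta> where "\<beta> = op_apply n d (?T h) \<psi>"
  define Na where "Na = vnorm2 n d \<alpha>"
  define Nb where "Nb = vnorm2 n d \<beta>"
  define r where "r = Nb / Na"
  have lg: "local_ops n d g" and lh: "local_ops n d h"
    using g h by (auto simp: local_invertible_def)
  obtain ginv where lgi: "local_ops n d ginv" and ginv: "\<forall>j<n. g j * ginv j = 1\<^sub>m (d j) \<and> ginv j * g j = 1\<^sub>m (d j)"
    using local_inverse[OF g] by blast
  obtain hinv where lhi: "local_ops n d hinv" and hinv: "\<forall>j<n. h j * hinv j = 1\<^sub>m (d j) \<and> hinv j * h j = 1\<^sub>m (d j)"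
    using local_inverse[OF h] by blast
  have ginv': "\<forall>j<n. ginv j * g j = 1\<^sub>m (d j)" using ginv by auto
  have hinv': "\<forall>j<n. hinv j * h j = 1\<^sub>m (d j)" using hinv by auto
  have Na: "Na > 0" unfolding Na_def \<alpha>_def by (rule nonzero_image[where \<psi>=\<psi> and xz=xz, OF lg lgi ginv' xz psi0])
  have Nb: "Nb > 0" unfolding Nb_def \<beta>_def by (rule nonzero_image[where \<psi>=\<psi> and xz=xz, OF lh lhi hinv' xz psi0])
  have r: "r > 0" unfolding r_def using Na Nb by simp
  obtain Ks where sk: "sep_kraus n d Ks" and ch: "op_eq n d (apply_channel n d Ks (proj n d \<alpha>)) (proj n d \<beta>)"
    using sep unfolding sep_transformable_def \<alpha>_def \<beta>_def by blast
  have lK: "local_ops n d K" if "K \<in> set Ks" for K using sk that by (auto simp: sep_kraus_def)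
  define f where "f = (\<lambda>K. op_apply n d (?T K) \<alpha>)"
  have E: "\<forall>x\<in>?I. \<forall>y\<in>?I. (\<Sum>K\<leftarrow>Ks. f K x * cnj (f K y) / complex_of_real Na)
      = \<beta> x * cnj (\<beta> y) / complex_of_real Nb"
    using ch unfolding op_eq_def apply_channel_def proj_def channel_term f_def Na_def Nb_def by simp
  define c where "c = (\<lambda>K. ip n d \<beta> (f K) / ip n d \<beta> \<beta>)"
  have pro: "f K x = c K * \<beta> x" if "K \<in> set Ks" "x \<in> ?I" for K x
    unfolding c_def by (rule proportional[OF E[unfolded Nb_def] Na Nb[unfolded Nb_def] that])
  have csum: "(\<Sum>K\<leftarrow>Ks. (cmod (c K))\<^sup>2) = Na / Nb"
    unfolding c_def Nb_def by (rule coeff_sum[OF E[unfolded Nb_def] Na Nb[unfolded Nb_def]])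
  define M where "M = (\<lambda>K j. hinv j * (K j * g j))"
  define S where "S = (\<lambda>K j. if j = 0 then (1 / c K) \<cdot>\<^sub>m M K j else M K j)"
  define Gt where "Gt = (\<lambda>K. op_mult n d (op_mult n d (op_adj (?T g)) (gram n d K)) (?T g))"
  have lM: "local_ops n d (M K)" if "K \<in> set Ks" for K
    unfolding M_def using lK[OF that] lg lhi by (intro local_ops_mult) auto
  have lS: "local_ops n d (S K)" if "K \<in> set Ks" for K
    unfolding S_def using lM[OF that] by (rule local_ops_scale)
  have MPsi: "op_apply n d (?T (M K)) \<psi> x = c K * \<psi> x" if K: "K \<in> set Ks" and x: "x \<in> ?I" for K x
  proof -
    have "op_apply n d (?T (M K)) \<psi> x = op_apply n d (?T hinv) (op_apply n d (?T (\<lambda>j. K j * g j)) \<psi>) x"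
      unfolding M_def by (rule apply_tensor_mult[OF lhi local_ops_mult[OF lK[OF K] lg] x])
    also have "\<dots> = op_apply n d (?T hinv) (\<lambda>z. c K * \<beta> z) x"
    proof (rule op_apply_cong)
      fix z assume z: "z \<in> ?I"
      have "op_apply n d (?T (\<lambda>j. K j * g j)) \<psi> z = f K z"
        unfolding f_def \<alpha>_def by (rule apply_tensor_mult[OF lK[OF K] lg z])
      then show "op_apply n d (?T (\<lambda>j. K j * g j)) \<psi> z = c K * \<beta> z" using pro[OF K z] by simp
    qed simp
    also have "\<dots> = c K * op_apply n d (?T hinv) \<beta> x" by (rule op_apply_scale_vec)
    also have "op_apply n d (?T hinv) \<beta> x = \<psi> x"
      unfolding \<beta>_def by (rule apply_inv[OF lhi lh hinv' x])
    finally show ?thesis .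
  qed
  have SPsi: "op_apply n d (?T (S K)) \<psi> x = \<psi> x" if K: "K \<in> set Ks" and cK: "c K \<noteq> 0" and x: "x \<in> ?I" for K x
  proof -
    have "op_apply n d (?T (S K)) \<psi> x = op_apply n d (\<lambda>y z. (1 / c K) * ?T (M K) y z) \<psi> x"
      unfolding S_def using tensor_scale[OF n lM[OF K] x] by (intro op_apply_cong) auto
    also have "\<dots> = (1 / c K) * op_apply n d (?T (M K)) \<psi> x" by (rule op_apply_scale_op)
    finally show ?thesis using MPsi[OF K x] cK by simp
  qed
  have stab: "in_stabilizer n d \<psi> (S K)" if K: "K \<in> set Ks" and cK: "c K \<noteq> 0" for K
    unfolding in_stabilizer_def local_invertible_def
    using lS[OF K] SPsi[OF K cK] stab_invertible[OF ent lS[OF K]] by auto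
  have gramrel: "complex_of_real ((cmod (c K))\<^sup>2) *
      op_mult n d (op_mult n d (op_adj (?T (S K))) (gram n d h)) (?T (S K)) x y = Gt K x y"
    if K: "K \<in> set Ks" and cK: "c K \<noteq> 0" and x: "x \<in> ?I" and y: "y \<in> ?I" for K x y
  proof -
    define X where "X = op_mult n d (?T h) (?T (S K))"
    define Y where "Y = op_mult n d (?T K) (?T g)"
    have XY: "X z w = (1 / c K) * Y z w" if z: "z \<in> ?I" and w: "w \<in> ?I" for z w
    proof -
      have "X z w = ?T (\<lambda>j. h j * S K j) z w"
        unfolding X_def by (rule tensor_mult[OF lh lS[OF K] z w])
      also have "?T (\<lambda>j. h j * S K j) = ?T (\<lambda>j. if j = 0 then (1 / c K) \<cdot>\<^sub>m (h j * M K j) else h j * M K j)"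
        unfolding S_def using lh lM[OF K] n
        by (intro tensor_cong) (auto simp: local_ops_def intro!: mult_smult_distrib[of _ "d 0" "d 0" _ "d 0"])
      also have "\<dots> z w = (1 / c K) * ?T (\<lambda>j. h j * M K j) z w"
        by (rule tensor_scale[OF n local_ops_mult[OF lh lM[OF K]] z w])
      also have "?T (\<lambda>j. h j * M K j) = ?T (\<lambda>j. K j * g j)"
      proof (rule tensor_cong)
        fix j assume j: "j < n"
        have hj: "h j \<in> carrier_mat (d j) (d j)" and hij: "hinv j \<in> carrier_mat (d j) (d j)"
          and Kj: "K j \<in> carrier_mat (d j) (d j)" and gj: "g j \<in> carrier_mat (d j) (d j)"
          using j lh lhi lK[OF K] lg by (auto simp: local_ops_def)
        have KG: "K j * g j \<in> carrier_mat (d j) (d j)" using Kj gj by (rule mult_carrier_mat)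
        have "h j * (hinv j * (K j * g j)) = (h j * hinv j) * (K j * g j)"
          by (rule assoc_mult_mat[OF hj hij KG, symmetric])
        also have "\<dots> = K j * g j" using hinv j left_mult_one_mat[OF KG] by simp
        finally show "h j * M K j = K j * g j" unfolding M_def .
      qed
      also have "?T (\<lambda>j. K j * g j) z w = Y z w"
        unfolding Y_def by (rule tensor_mult[OF lK[OF K] lg z w, symmetric])
      finally show ?thesis .
    qed
    have "op_mult n d (op_mult n d (op_adj (?T (S K))) (gram n d h)) (?T (S K)) x y
        = op_mult n d (op_adj X) X x y"
      unfolding gram_def X_def by (simp only: gram_assoc)
    also have "\<dots> = op_mult n d (op_adj (\<lambda>z w. (1 / c K) * Y z w)) (\<lambda>z w. (1 / c K) * Y z w) x y"
      using XY by (intro op_mult_cong x y) (auto simp: op_adj_def)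
    also have "\<dots> = cnj (1 / c K) * (1 / c K) * op_mult n d (op_adj Y) Y x y"
      by (simp only: op_adj_scale op_mult_scale_left op_mult_scale_right mult.assoc)
    also have "op_mult n d (op_adj Y) Y = Gt K"
      unfolding Gt_def Y_def gram_def by (simp only: gram_assoc)
    finally show ?thesis using cK by (simp add: mult_cnj_real[symmetric] del: of_real_power)
  qed
  define P where "P = (\<lambda>K. c K \<noteq> 0)"
  define pS where "pS = map (\<lambda>K. (r * (cmod (c K))\<^sup>2, S K)) (filter P Ks)"
  define Ns where "Ns = filter (\<lambda>K. \<not> P K) Ks"
  have A1: "\<forall>(p, S)\<in>set pS. 0 \<le> p \<and> in_stabilizer n d \<psi> S"
    unfolding pS_def P_def using r stab by auto
  have "(\<Sum>(p, S)\<leftarrow>pS. p) = (\<Sum>K\<leftarrow>filter P Ks. r * (cmod (c K))\<^sup>2)"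
    unfolding pS_def by (simp add: o_def)
  also have "\<dots> = r * (\<Sum>K\<leftarrow>filter P Ks. (cmod (c K))\<^sup>2)"
    by (simp add: sum_list_mult_left)
  also have "(\<Sum>K\<leftarrow>filter P Ks. (cmod (c K))\<^sup>2) = (\<Sum>K\<leftarrow>Ks. (cmod (c K))\<^sup>2)"
  proof -
    have "(\<Sum>K\<leftarrow>filter (\<lambda>K. \<not> P K) Ks. (cmod (c K))\<^sup>2) = 0"
      unfolding P_def by (induction Ks) auto
    then show ?thesis using sum_list_filter_split[where P=P and F="\<lambda>K. (cmod (c K))\<^sup>2" and ks=Ks] by simp
  qed
  finally have A2: "(\<Sum>(p, S)\<leftarrow>pS. p) = 1" using csum Na Nb unfolding r_def by simp
  have A3: "\<forall>N\<in>set Ns. in_annihilator n d \<alpha> N"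
    unfolding Ns_def P_def in_annihilator_def using lK pro unfolding f_def by auto
  have A4: "op_eq n d
            (\<lambda>x y. complex_of_real (1 / r) *
                      (\<Sum>(p, S)\<leftarrow>pS. complex_of_real p *
                         op_mult n d (op_mult n d (op_adj (?T S)) (gram n d h)) (?T S) x y)
                   + op_mult n d (op_mult n d (op_adj (?T g))
                        (\<lambda>x' y'. \<Sum>N\<leftarrow>Ns. gram n d N x' y')) (?T g) x y)
            (gram n d g)"
    unfolding op_eq_def
  proof (intro ballI)
    fix x y assume x: "x \<in> ?I" and y: "y \<in> ?I"
    have "complex_of_real (1 / r) * (\<Sum>(p, S)\<leftarrow>pS. complex_of_real p *
             op_mult n d (op_mult n d (op_adj (?T S)) (gram n d h)) (?T S) x y)
        = (\<Sum>K\<leftarrow>filter P Ks. complex_of_real (1 / r) * (complex_of_real r * (complex_of_real ((cmod (c K))\<^sup>2) *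
             op_mult n d (op_mult n d (op_adj (?T (S K))) (gram n d h)) (?T (S K)) x y)))"
      unfolding pS_def by (simp add: o_def sum_list_mult_left mult.assoc del: of_real_power)
    also have "\<dots> = (\<Sum>K\<leftarrow>filter P Ks. Gt K x y)"
    proof (intro sum_list_cong')
      fix K assume "K \<in> set (filter P Ks)"
      then have K: "K \<in> set Ks" and cK: "c K \<noteq> 0" by (auto simp: P_def)
      have rr: "complex_of_real (1 / r) * complex_of_real r = 1" using r by (simp flip: of_real_mult)
      show "complex_of_real (1 / r) * (complex_of_real r * (complex_of_real ((cmod (c K))\<^sup>2) *
             op_mult n d (op_mult n d (op_adj (?T (S K))) (gram n d h)) (?T (S K)) x y)) = Gt K x y"
        by (simp only: mult.assoc[symmetric] rr mult_1_left gramrel[OF K cK x y])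
    qed
    finally have L1: "complex_of_real (1 / r) * (\<Sum>(p, S)\<leftarrow>pS. complex_of_real p *
             op_mult n d (op_mult n d (op_adj (?T S)) (gram n d h)) (?T S) x y) = (\<Sum>K\<leftarrow>filter P Ks. Gt K x y)" .
    have L2: "op_mult n d (op_mult n d (op_adj (?T g)) (\<lambda>x' y'. \<Sum>N\<leftarrow>Ns. gram n d N x' y')) (?T g) x y
        = (\<Sum>N\<leftarrow>Ns. Gt N x y)"
      unfolding Gt_def by (simp only: op_mult_sum_list_right_fun op_mult_sum_list_left_fun)
    have "(\<Sum>K\<leftarrow>Ks. Gt K x y) = op_mult n d (op_mult n d (op_adj (?T g)) (\<lambda>x' y'. \<Sum>K\<leftarrow>Ks. gram n d K x' y')) (?T g) x y"
      unfolding Gt_def by (simp only: op_mult_sum_list_right_fun op_mult_sum_list_left_fun)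
    also have "\<dots> = op_mult n d (op_mult n d (op_adj (?T g)) op_id) (?T g) x y"
    proof (rule op_mult_cong[OF _ _ x y])
      fix z w assume z: "z \<in> ?I" and w: "w \<in> ?I"
      show "op_mult n d (op_adj (?T g)) (\<lambda>x' y'. \<Sum>K\<leftarrow>Ks. gram n d K x' y') z w = op_mult n d (op_adj (?T g)) op_id z w"
        using sk unfolding sep_kraus_def op_eq_def gram_def by (intro op_mult_cong z w) auto
    qed simp
    also have "\<dots> = op_mult n d (op_adj (?T g)) (?T g) x y"
      by (intro op_mult_cong x y) (auto simp: op_mult_id_right)
    finally have L3: "(\<Sum>K\<leftarrow>Ks. Gt K x y) = gram n d g x y" unfolding gram_def .
    show "complex_of_real (1 / r) * (\<Sum>(p, S)\<leftarrow>pS. complex_of_real p *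
             op_mult n d (op_mult n d (op_adj (?T S)) (gram n d h)) (?T S) x y)
          + op_mult n d (op_mult n d (op_adj (?T g)) (\<lambda>x' y'. \<Sum>N\<leftarrow>Ns. gram n d N x' y')) (?T g) x y
          = gram n d g x y"
      unfolding L1 L2 L3[symmetric] unfolding Ns_def by (rule sum_list_filter_split)
  qed
  show ?thesis unfolding Let_def
    using A1 A2 A3[unfolded \<alpha>_def] A4[unfolded r_def Na_def Nb_def \<alpha>_def \<beta>_def] unfolding r_def Na_def Nb_def \<alpha>_def \<beta>_def
    by blast
qed

lemma C_add_scale:
  "op_mult n d (op_mult n d A (\<lambda>x y. a * F x y + G x y)) B x y
   = a * op_mult n d (op_mult n d A F) B x y + op_mult n d (op_mult n d A G) B x y"
  by (simp only: op_mult_add_right_fun op_mult_add_left_fun op_mult_scale_right_fun op_mult_scale_left_fun)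

lemma C_scale:
  "op_mult n d (op_mult n d A (\<lambda>x y. a * F x y)) B x y = a * op_mult n d (op_mult n d A F) B x y"
  by (simp only: op_mult_scale_right_fun op_mult_scale_left_fun)

lemma C_sum_pairs:
  "op_mult n d (op_mult n d A (\<lambda>x y. \<Sum>(p, S)\<leftarrow>pS. F p S x y)) B x y
   = (\<Sum>(p, S)\<leftarrow>pS. op_mult n d (op_mult n d A (F p S)) B x y)"
  by (induction pS) (auto simp: op_mult_def sum_distrib_left sum_distrib_right distrib_left distrib_right sum.distrib)

lemma backward:
  fixes n :: nat and d :: "nat \<Rightarrow> nat" and \<psi> :: gvec and g h :: local_op
  assumes n: "0 < n"
    and g: "local_invertible n d g" and h: "local_invertible n d h"
    and xz: "xz \<in> idxs n d" and psi0: "\<psi> xz \<noteq> 0"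
    and R: "(let G = gram n d g; H = gram n d h;
         r = vnorm2 n d (op_apply n d (tensor_op n h) \<psi>) / vnorm2 n d (op_apply n d (tensor_op n g) \<psi>)
     in \<exists>(pS :: (real \<times> local_op) list) (Ns :: local_op list).
          (\<forall>(p, S)\<in>set pS. 0 \<le> p \<and> in_stabilizer n d \<psi> S) \<and>
          (\<Sum>(p, S)\<leftarrow>pS. p) = 1 \<and>
          (\<forall>N\<in>set Ns. in_annihilator n d (op_apply n d (tensor_op n g) \<psi>) N) \<and>
          op_eq n d
            (\<lambda>x y. complex_of_real (1 / r) *
                      (\<Sum>(p, S)\<leftarrow>pS. complex_of_real p *
                         op_mult n d (op_mult n d (op_adj (tensor_op n S)) H) (tensor_op n S) x y)
                   + op_mult n d (op_mult n d (op_adj (tensor_op n g))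
                        (\<lambda>x' y'. \<Sum>N\<leftarrow>Ns. gram n d N x' y')) (tensor_op n g) x y)
            G)"
  shows "sep_transformable n d (op_apply n d (tensor_op n g) \<psi>) (op_apply n d (tensor_op n h) \<psi>)"
proof -
  let ?I = "idxs n d"
  let ?T = "tensor_op n"
  define \<alpha> where "\<alpha> = op_apply n d (?T g) \<psi>"
  define \<beta> where "\<beta> = op_apply n d (?T h) \<psi>"
  define Na where "Na = vnorm2 n d \<alpha>"
  define Nb where "Nb = vnorm2 n d \<beta>"
  define r where "r = Nb / Na"
  have lg: "local_ops n d g" and lh: "local_ops n d h"
    using g h by (auto simp: local_invertible_def)
  obtain ginv where lgi: "local_ops n d ginv" and ginv: "\<forall>j<n. g j * ginv j = 1\<^sub>m (d j) \<and> ginv j * g j = 1\<^sub>m (d j)"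
    using local_inverse[OF g] by blast
  obtain hinv where lhi: "local_ops n d hinv" and hinv: "\<forall>j<n. h j * hinv j = 1\<^sub>m (d j) \<and> hinv j * h j = 1\<^sub>m (d j)"
    using local_inverse[OF h] by blast
  have ginv': "\<forall>j<n. ginv j * g j = 1\<^sub>m (d j)" using ginv by auto
  have ginv'': "\<forall>j<n. g j * ginv j = 1\<^sub>m (d j)" using ginv by auto
  have hinv': "\<forall>j<n. hinv j * h j = 1\<^sub>m (d j)" using hinv by auto
  have Na: "Na > 0" unfolding Na_def \<alpha>_def by (rule nonzero_image[where \<psi>=\<psi> and xz=xz, OF lg lgi ginv' xz psi0])
  have Nb: "Nb > 0" unfolding Nb_def \<beta>_def by (rule nonzero_image[where \<psi>=\<psi> and xz=xz, OF lh lhi hinv' xz psi0])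
  have r: "r > 0" unfolding r_def using Na Nb by simp
  define SHS where "SHS = (\<lambda>S. op_mult n d (op_mult n d (op_adj (?T S)) (gram n d h)) (?T S))"
  obtain pS Ns where
    B1: "\<forall>(p, S)\<in>set pS. 0 \<le> p \<and> in_stabilizer n d \<psi> S" and B2: "(\<Sum>(p, S)\<leftarrow>pS. p) = 1"
    and B3: "\<forall>N\<in>set Ns. in_annihilator n d \<alpha> N"
    and B4: "op_eq n d (\<lambda>x y. complex_of_real (1 / r) * (\<Sum>(p, S)\<leftarrow>pS. complex_of_real p * SHS S x y)
                   + op_mult n d (op_mult n d (op_adj (?T g)) (\<lambda>x' y'. \<Sum>N\<leftarrow>Ns. gram n d N x' y')) (?T g) x y)
            (gram n d g)"
    using R unfolding Let_def r_def Na_def Nb_def \<alpha>_def \<beta>_def SHS_def by blast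
  define W where "W = (\<lambda>S j. h j * (S j * ginv j))"
  define sc where "sc = (\<lambda>p. complex_of_real (sqrt (p / r)))"
  define Kof where "Kof = (\<lambda>p S j. if j = 0 then sc p \<cdot>\<^sub>m W S j else W S j)"
  define Ks where "Ks = map (\<lambda>(p, S). Kof p S) pS @ Ns"
  define C where "C = (\<lambda>Z. op_mult n d (op_mult n d (op_adj (?T ginv)) Z) (?T ginv))"
  have lS: "local_ops n d S" if "(p, S) \<in> set pS" for p S
    using B1 that by (auto simp: in_stabilizer_def local_invertible_def)
  have SPsi: "op_apply n d (?T S) \<psi> x = \<psi> x" if "(p, S) \<in> set pS" "x \<in> ?I" for p S x
    using B1 that by (auto simp: in_stabilizer_def)
  have p0: "0 \<le> p" if "(p, S) \<in> set pS" for p S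
    using B1 that by auto
  have lN: "local_ops n d N" if "N \<in> set Ns" for N
    using B3 that by (auto simp: in_annihilator_def)
  have lSg: "local_ops n d (\<lambda>j. S j * ginv j)" if "(p, S) \<in> set pS" for p S
    using local_ops_mult[OF lS[OF that] lgi] .
  have lW: "local_ops n d (W S)" if "(p, S) \<in> set pS" for p S
    unfolding W_def using local_ops_mult[OF lh lSg[OF that]] .
  have lK: "local_ops n d (Kof p S)" if "(p, S) \<in> set pS" for p S
    unfolding Kof_def using lW[OF that] by (rule local_ops_scale)
  have TK: "?T (Kof p S) z w = sc p * ?T (W S) z w" if "(p, S) \<in> set pS" "z \<in> ?I" "w \<in> ?I" for p S z w
    unfolding Kof_def using tensor_scale[OF n lW[OF that(1)] that(2,3)] .
  have TW: "?T (W S) z w = op_mult n d (?T h) (op_mult n d (?T S) (?T ginv)) z w"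
    if ps: "(p, S) \<in> set pS" and z: "z \<in> ?I" and w: "w \<in> ?I" for p S z w
  proof -
    have "?T (W S) z w = op_mult n d (?T h) (?T (\<lambda>j. S j * ginv j)) z w"
      unfolding W_def by (rule tensor_mult[OF lh lSg[OF ps] z w, symmetric])
    also have "\<dots> = op_mult n d (?T h) (op_mult n d (?T S) (?T ginv)) z w"
      using tensor_mult[OF lS[OF ps] lgi] by (intro op_mult_cong z w) auto
    finally show ?thesis .
  qed
  have WA: "op_apply n d (?T (W S)) \<alpha> x = \<beta> x" if ps: "(p, S) \<in> set pS" and x: "x \<in> ?I" for p S x
  proof -
    have "op_apply n d (?T (W S)) \<alpha> x = op_apply n d (?T h) (op_apply n d (?T (\<lambda>j. S j * ginv j)) \<alpha>) x"
      unfolding W_def by (rule apply_tensor_mult[OF lh lSg[OF ps] x])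
    also have "\<dots> = op_apply n d (?T h) \<psi> x"
    proof (rule op_apply_cong)
      fix z assume z: "z \<in> ?I"
      have "op_apply n d (?T (\<lambda>j. S j * ginv j)) \<alpha> z = op_apply n d (?T S) (op_apply n d (?T ginv) \<alpha>) z"
        by (rule apply_tensor_mult[OF lS[OF ps] lgi z])
      also have "\<dots> = op_apply n d (?T S) \<psi> z"
        unfolding \<alpha>_def using apply_inv[OF lgi lg ginv'] by (intro op_apply_cong) auto
      also have "\<dots> = \<psi> z" by (rule SPsi[OF ps z])
      finally show "op_apply n d (?T (\<lambda>j. S j * ginv j)) \<alpha> z = \<psi> z" .
    qed simp
    finally show ?thesis unfolding \<beta>_def .
  qed
  have KA: "op_apply n d (?T (Kof p S)) \<alpha> x = sc p * \<beta> x" if ps: "(p, S) \<in> set pS" and x: "x \<in> ?I" for p S x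
  proof -
    have "op_apply n d (?T (Kof p S)) \<alpha> x = op_apply n d (\<lambda>z w. sc p * ?T (W S) z w) \<alpha> x"
      using TK[OF ps] x by (intro op_apply_cong) auto
    also have "\<dots> = sc p * op_apply n d (?T (W S)) \<alpha> x" by (rule op_apply_scale_op)
    finally show ?thesis using WA[OF ps x] by simp
  qed
  have scsq: "cnj (sc p) * sc p = complex_of_real (p / r)" if ps: "(p, S) \<in> set pS" for p S
  proof -
    have "cnj (sc p) * sc p = complex_of_real (sqrt (p / r) * sqrt (p / r))"
      unfolding sc_def by (simp only: complex_cnj_complex_of_real of_real_mult)
    also have "sqrt (p / r) * sqrt (p / r) = p / r" using p0[OF ps] r by simp
    finally show ?thesis .
  qed
  have gramK: "gram n d (Kof p S) x y = complex_of_real (p / r) * C (SHS S) x y"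
    if ps: "(p, S) \<in> set pS" and x: "x \<in> ?I" and y: "y \<in> ?I" for p S x y
  proof -
    define V where "V = op_mult n d (?T h) (op_mult n d (?T S) (?T ginv))"
    have "gram n d (Kof p S) x y = op_mult n d (op_adj (\<lambda>z w. sc p * V z w)) (\<lambda>z w. sc p * V z w) x y"
      unfolding gram_def V_def using TK[OF ps] TW[OF ps]
      by (intro op_mult_cong x y) (auto simp: op_adj_def)
    also have "\<dots> = cnj (sc p) * sc p * op_mult n d (op_adj V) V x y"
      by (simp only: op_adj_scale op_mult_scale_left op_mult_scale_right mult.assoc)
    also have "op_mult n d (op_adj V) V = C (SHS S)"
      unfolding V_def C_def SHS_def gram_def by (simp only: op_adj_mult op_mult_assoc_fun)
    finally show ?thesis using scsq[OF ps] by simp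
  qed
  have gg: "op_mult n d (?T g) (?T ginv) z w = op_id z w" if "z \<in> ?I" "w \<in> ?I" for z w
    by (rule tensor_inv[OF lg lgi ginv'' that])
  have CG: "C (gram n d g) x y = op_id x y" if x: "x \<in> ?I" and y: "y \<in> ?I" for x y
  proof -
    have "C (gram n d g) x y = op_mult n d (op_adj (op_mult n d (?T g) (?T ginv))) (op_mult n d (?T g) (?T ginv)) x y"
      unfolding C_def gram_def by (simp only: gram_assoc)
    also have "\<dots> = op_mult n d (op_adj op_id) op_id x y"
      using gg by (intro op_mult_cong x y) (auto simp: op_adj_def)
    also have "\<dots> = op_id x y" using x by (simp add: op_adj_id op_mult_id_left)
    finally show ?thesis .
  qed
  have CY: "C (op_mult n d (op_mult n d (op_adj (?T g)) Yf) (?T g)) x y = Yf x y"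
    if x: "x \<in> ?I" and y: "y \<in> ?I" for Yf x y
  proof -
    have "C (op_mult n d (op_mult n d (op_adj (?T g)) Yf) (?T g)) x y
        = op_mult n d (op_adj (op_mult n d (?T g) (?T ginv))) (op_mult n d Yf (op_mult n d (?T g) (?T ginv))) x y"
      unfolding C_def by (simp only: op_adj_mult op_mult_assoc_fun)
    also have "\<dots> = op_mult n d (op_adj op_id) (op_mult n d Yf op_id) x y"
      using gg by (intro op_mult_cong x y) (auto simp: op_adj_def intro!: op_mult_cong)
    also have "\<dots> = Yf x y" using x y by (simp add: op_adj_id op_mult_id_left op_mult_id_right)
    finally show ?thesis .
  qed
  have kraus: "(\<Sum>K\<leftarrow>Ks. op_mult n d (op_adj (?T K)) (?T K) x y) = op_id x y"
    if x: "x \<in> ?I" and y: "y \<in> ?I" for x y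
  proof -
    have "(\<Sum>K\<leftarrow>Ks. op_mult n d (op_adj (?T K)) (?T K) x y)
        = (\<Sum>(p, S)\<leftarrow>pS. gram n d (Kof p S) x y) + (\<Sum>N\<leftarrow>Ns. gram n d N x y)"
      unfolding Ks_def gram_def by (simp add: o_def case_prod_unfold)
    also have "(\<Sum>(p, S)\<leftarrow>pS. gram n d (Kof p S) x y) = (\<Sum>(p, S)\<leftarrow>pS. complex_of_real (p / r) * C (SHS S) x y)"
      by (intro sum_list_cong') (auto simp: gramK x y)
    also have "\<dots> = complex_of_real (1 / r) * (\<Sum>(p, S)\<leftarrow>pS. complex_of_real p * C (SHS S) x y)"
      by (simp add: sum_list_mult_left case_prod_unfold)
    also have "\<dots> + (\<Sum>N\<leftarrow>Ns. gram n d N x y) = C (\<lambda>x y. complex_of_real (1 / r) * (\<Sum>(p, S)\<leftarrow>pS. complex_of_real p * SHS S x y)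
                   + op_mult n d (op_mult n d (op_adj (?T g)) (\<lambda>x' y'. \<Sum>N\<leftarrow>Ns. gram n d N x' y')) (?T g) x y) x y"
      unfolding C_def C_add_scale C_sum_pairs C_scale
      using CY[OF x y, of "\<lambda>x' y'. \<Sum>N\<leftarrow>Ns. gram n d N x' y'"] unfolding C_def by simp
    also have "\<dots> = C (gram n d g) x y"
      unfolding C_def using B4 unfolding op_eq_def by (intro op_mult_cong x y) (auto intro!: op_mult_cong)
    also have "\<dots> = op_id x y" by (rule CG[OF x y])
    finally show ?thesis .
  qed
  have sepk: "sep_kraus n d Ks"
    unfolding sep_kraus_def op_eq_def using kraus lK lN by (auto simp: Ks_def)
  have out: "op_eq n d (apply_channel n d Ks (proj n d \<alpha>)) (proj n d \<beta>)"
    unfolding op_eq_def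
  proof (intro ballI)
    fix x y assume x: "x \<in> ?I" and y: "y \<in> ?I"
    have "apply_channel n d Ks (proj n d \<alpha>) x y
        = (\<Sum>K\<leftarrow>Ks. op_apply n d (?T K) \<alpha> x * cnj (op_apply n d (?T K) \<alpha> y) / complex_of_real Na)"
      unfolding apply_channel_def proj_def channel_term Na_def ..
    also have "\<dots> = (\<Sum>(p, S)\<leftarrow>pS. complex_of_real (p / r) * (\<beta> x * cnj (\<beta> y) / complex_of_real Na))"
    proof -
      have "(\<Sum>N\<leftarrow>Ns. op_apply n d (?T N) \<alpha> x * cnj (op_apply n d (?T N) \<alpha> y) / complex_of_real Na) = 0"
        using B3 x by (induction Ns) (auto simp: in_annihilator_def)
      moreover have "(\<Sum>(p, S)\<leftarrow>pS. op_apply n d (?T (Kof p S)) \<alpha> x * cnj (op_apply n d (?T (Kof p S)) \<alpha> y) / complex_of_real Na)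
          = (\<Sum>(p, S)\<leftarrow>pS. complex_of_real (p / r) * (\<beta> x * cnj (\<beta> y) / complex_of_real Na))"
      proof (intro sum_list_cong')
        fix k assume k: "k \<in> set pS"
        obtain p S where kp: "k = (p, S)" by (cases k)
        have ps: "(p, S) \<in> set pS" using k kp by simp
        show "(case k of (p, S) \<Rightarrow> op_apply n d (?T (Kof p S)) \<alpha> x * cnj (op_apply n d (?T (Kof p S)) \<alpha> y) / complex_of_real Na)
            = (case k of (p, S) \<Rightarrow> complex_of_real (p / r) * (\<beta> x * cnj (\<beta> y) / complex_of_real Na))"
          unfolding kp using KA[OF ps x] KA[OF ps y] scsq[OF ps] by (simp add: field_simps)
      qed
      ultimately show ?thesis unfolding Ks_def by (simp add: o_def case_prod_unfold)
    qed
    also have "\<dots> = complex_of_real ((\<Sum>(p, S)\<leftarrow>pS. p) / r) * (\<beta> x * cnj (\<beta> y) / complex_of_real Na)"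
    proof -
      have "\<And>pS :: (real \<times> local_op) list. (\<Sum>(p, S)\<leftarrow>pS. complex_of_real (p / r) * X) = complex_of_real ((\<Sum>(p, S)\<leftarrow>pS. p) / r) * X" for X
      proof -
        fix pS :: "(real \<times> local_op) list"
        show "(\<Sum>(p, S)\<leftarrow>pS. complex_of_real (p / r) * X) = complex_of_real ((\<Sum>(p, S)\<leftarrow>pS. p) / r) * X"
          by (induction pS) (auto simp: distrib_right add_divide_distrib)
      qed
      then show ?thesis by blast
    qed
    also have "\<dots> = \<beta> x * cnj (\<beta> y) / complex_of_real Nb"
      using B2 Na Nb unfolding r_def by (simp add: field_simps)
    finally show "apply_channel n d Ks (proj n d \<alpha>) x y = proj n d \<beta> x y"
      unfolding proj_def Nb_def .
  qed
  show ?thesis unfolding sep_transformable_def \<alpha>_def[symmetric] \<beta>_def[symmetric]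
    using sepk out by blast
qed

lemma n0_left:
  "sep_transformable 0 d (op_apply 0 d (tensor_op 0 g) \<psi>) (op_apply 0 d (tensor_op 0 h) \<psi>)"
proof -
  have Tg: "tensor_op 0 g = tensor_op 0 h" by (simp add: tensor_op_def)
  show ?thesis unfolding sep_transformable_def Tg
    by (rule exI[of _ "[\<lambda>j. 1\<^sub>m (d j)]"])
       (simp add: sep_kraus_def local_ops_def op_eq_def idxs_0 apply_channel_def op_mult_def op_adj_def
         tensor_op_def op_id_def)
qed

lemma n0_right:
  "(let G = gram 0 d g; H = gram 0 d h;
         r = vnorm2 0 d (op_apply 0 d (tensor_op 0 h) \<psi>) / vnorm2 0 d (op_apply 0 d (tensor_op 0 g) \<psi>)
     in \<exists>(pS :: (real \<times> local_op) list) (Ns :: local_op list).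
          (\<forall>(p, S)\<in>set pS. 0 \<le> p \<and> in_stabilizer 0 d \<psi> S) \<and>
          (\<Sum>(p, S)\<leftarrow>pS. p) = 1 \<and>
          (\<forall>N\<in>set Ns. in_annihilator 0 d (op_apply 0 d (tensor_op 0 g) \<psi>) N) \<and>
          op_eq 0 d
            (\<lambda>x y. complex_of_real (1 / r) *
                      (\<Sum>(p, S)\<leftarrow>pS. complex_of_real p *
                         op_mult 0 d (op_mult 0 d (op_adj (tensor_op 0 S)) H) (tensor_op 0 S) x y)
                   + op_mult 0 d (op_mult 0 d (op_adj (tensor_op 0 g))
                        (\<lambda>x' y'. \<Sum>N\<leftarrow>Ns. gram 0 d N x' y')) (tensor_op 0 g) x y)
            G)"
proof (cases "\<psi> (\<lambda>_. undefined) = 0")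
  case True
  show ?thesis unfolding Let_def
    apply (rule exI[of _ "[(1, \<lambda>j. 1\<^sub>m (d j))]"])
    apply (rule exI[of _ "[\<lambda>j. 1\<^sub>m (d j)]"])
    using True
    by (simp add: in_stabilizer_def in_annihilator_def local_invertible_def local_ops_def op_eq_def idxs_0
        op_mult_def op_adj_def op_apply_def tensor_op_def gram_def vnorm2_def)
next
  case False
  show ?thesis unfolding Let_def
    apply (rule exI[of _ "[(1, \<lambda>j. 1\<^sub>m (d j))]"])
    apply (rule exI[of _ "[]"])
    using False
    by (simp add: in_stabilizer_def in_annihilator_def local_invertible_def local_ops_def op_eq_def idxs_0
        op_mult_def op_adj_def op_apply_def tensor_op_def gram_def vnorm2_def)
qed

theorem theorem2:
  fixes n :: nat and d :: "nat \<Rightarrow> nat" and \<psi> :: gvec and g h :: local_op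
  assumes dpos: "\<forall>j<n. 0 < d j"
    and ent: "fully_entangled n d \<psi>"
    and g: "local_invertible n d g"
    and h: "local_invertible n d h"
  shows "sep_transformable n d (op_apply n d (tensor_op n g) \<psi>) (op_apply n d (tensor_op n h) \<psi>)
    \<longleftrightarrow>
    (let G = gram n d g; H = gram n d h;
         r = vnorm2 n d (op_apply n d (tensor_op n h) \<psi>) / vnorm2 n d (op_apply n d (tensor_op n g) \<psi>)
     in \<exists>(pS :: (real \<times> local_op) list) (Ns :: local_op list).
          (\<forall>(p, S)\<in>set pS. 0 \<le> p \<and> in_stabilizer n d \<psi> S) \<and>
          (\<Sum>(p, S)\<leftarrow>pS. p) = 1 \<and>
          (\<forall>N\<in>set Ns. in_annihilator n d (op_apply n d (tensor_op n g) \<psi>) N) \<and>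
          op_eq n d
            (\<lambda>x y. complex_of_real (1 / r) *
                      (\<Sum>(p, S)\<leftarrow>pS. complex_of_real p *
                         op_mult n d (op_mult n d (op_adj (tensor_op n S)) H) (tensor_op n S) x y)
                   + op_mult n d (op_mult n d (op_adj (tensor_op n g))
                        (\<lambda>x' y'. \<Sum>N\<leftarrow>Ns. gram n d N x' y')) (tensor_op n g) x y)
            G)"
proof (cases "n = 0")
  case True
  show ?thesis unfolding True using n0_left[of d g \<psi> h] n0_right[of d g h \<psi>] by (intro iffI)
next
  case False
  then have n: "0 < n" by simp
  obtain x0 where x0: "x0 \<in> idxs n d" and psi0: "\<psi> x0 \<noteq> 0"
  proof -
    have d0: "0 < d 0" using dpos n by blast
    show ?thesis using psi_nonzero[OF ent n d0] that by blast
  qed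
  show ?thesis
  proof
    assume "sep_transformable n d (op_apply n d (tensor_op n g) \<psi>) (op_apply n d (tensor_op n h) \<psi>)"
    then show "let G = gram n d g; H = gram n d h;
         r = vnorm2 n d (op_apply n d (tensor_op n h) \<psi>) / vnorm2 n d (op_apply n d (tensor_op n g) \<psi>)
     in \<exists>(pS :: (real \<times> local_op) list) (Ns :: local_op list).
          (\<forall>(p, S)\<in>set pS. 0 \<le> p \<and> in_stabilizer n d \<psi> S) \<and>
          (\<Sum>(p, S)\<leftarrow>pS. p) = 1 \<and>
          (\<forall>N\<in>set Ns. in_annihilator n d (op_apply n d (tensor_op n g) \<psi>) N) \<and>
          op_eq n d
            (\<lambda>x y. complex_of_real (1 / r) *
                      (\<Sum>(p, S)\<leftarrow>pS. complex_of_real p *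
                         op_mult n d (op_mult n d (op_adj (tensor_op n S)) H) (tensor_op n S) x y)
                   + op_mult n d (op_mult n d (op_adj (tensor_op n g))
                        (\<lambda>x' y'. \<Sum>N\<leftarrow>Ns. gram n d N x' y')) (tensor_op n g) x y)
            G"
      by (rule forward[where \<psi>=\<psi> and xz=x0, OF n ent g h x0 psi0])
  next
    assume R: "let G = gram n d g; H = gram n d h;
         r = vnorm2 n d (op_apply n d (tensor_op n h) \<psi>) / vnorm2 n d (op_apply n d (tensor_op n g) \<psi>)
     in \<exists>(pS :: (real \<times> local_op) list) (Ns :: local_op list).
          (\<forall>(p, S)\<in>set pS. 0 \<le> p \<and> in_stabilizer n d \<psi> S) \<and>
          (\<Sum>(p, S)\<leftarrow>pS. p) = 1 \<and>
          (\<forall>N\<in>set Ns. in_annihilator n d (op_apply n d (tensor_op n g) \<psi>) N) \<and>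
          op_eq n d
            (\<lambda>x y. complex_of_real (1 / r) *
                      (\<Sum>(p, S)\<leftarrow>pS. complex_of_real p *
                         op_mult n d (op_mult n d (op_adj (tensor_op n S)) H) (tensor_op n S) x y)
                   + op_mult n d (op_mult n d (op_adj (tensor_op n g))
                        (\<lambda>x' y'. \<Sum>N\<leftarrow>Ns. gram n d N x' y')) (tensor_op n g) x y)
            G"
    show "sep_transformable n d (op_apply n d (tensor_op n g) \<psi>) (op_apply n d (tensor_op n h) \<psi>)"
      by (rule backward[where \<psi>=\<psi> and xz=x0, OF n g h x0 psi0 R])
  qed
qed

end
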